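(* Let $\mathbf{L}\in Q^2(\mathbb{D}^2)$ and let $F\colon\mathbb{D}^2\to\mathbb{C}$ be analytic. (i) If $F$ has bounded $\mathbf{L}$-index in joint variables, then for every $R\in(0,\beta]^2$ there exist $n_0\in\mathbb{Z}_+$ and $p\ge1$ such that for every $z^0\in\mathbb{D}^2$ there exists $(k_1^0,k_2^0)\in\mathbb{Z}_+^2$ with $k_1^0+k_2^0\le n_0$ and $$\max\Big\{|F^{(k_1^0,k_2^0)}(z)|: z\in\mathbb{D}^2\Big[z^0,\frac{R}{\mathbf{L}(z^0)}\Big]\Big\}\le p\,|F^{(k_1^0,k_2^0)}(z^0)|.$$ (ii) If for every $R\in(0,\beta]^2$ there exist $n_0\in\mathbb{Z}_+$ and $p\ge1$ such that for every $z^0\in\mathbb{D}^2$ there exist $k_1^0\le n_0$ and $k_2^0\le n_0$ with $$\max\Big\{|F^{(k_1^0,0)}(z)|: z\in\mathbb{D}^2\Big[z^0,\frac{R}{\mathbf{L}(z^0)}\Big]\Big\}\le p\,|F^{(k_1^0,0)}(z^0)|,\qquad \max\Big\{|F^{(0,k_2^0)}(z)|: z\in\mathbb{D}^2\Big[z^0,\frac{R}{\mathbf{L}(z^0)}\Big]\Big\}\le p\,|F^{(0,k_2^0)}(z^0)|,$$ then $F$ has bounded $\mathbf{L}$-index in joint variables.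
   Context: $\mathbb{D}^2=\{(z_1,z_2)\in\mathbb{C}^2:|z_1|<1,|z_2|<1\}$, $\mathbb{Z}_+=\{0,1,2,\dots\}$, $\mathbb{R}_+=[0,\infty)$. A constant $\beta>1$ is fixed. $\mathbf{L}(z)=(l_1(z),l_2(z))$, where each $l_j\colon\mathbb{D}^2\to\mathbb{R}_+$ is continuous and satisfies $l_j(z_1,z_2)>\beta/(1-|z_j|)$ for all $(z_1,z_2)\in\mathbb{D}^2$, $j=1,2$. For $z^0\in\mathbb{C}^2$ and $R=(r_1,r_2)\in\mathbb{R}_+^2$: $\mathbb{D}^2[z^0,R]=\{z:|z_j-z_j^0|\le r_j,\ j=1,2\}$ and $\frac{R}{\mathbf{L}(z^0)}=\big(\frac{r_1}{l_1(z^0)},\frac{r_2}{l_2(z^0)}\big)$. $F^{(p,q)}=\frac{\partial^{p+q}F}{\partial z_1^p\partial z_2^q}$. An analytic $F\colon\mathbb{D}^2\to\mathbb{C}$ has bounded $\mathbf{L}$-index in joint variables if there is $n_0\in\mathbb{Z}_+$ such that for all $z\in\mathbb{D}^2$ and all $(p_1,p_2)\in\mathbb{Z}_+^2$: $\frac{|F^{(p_1,p_2)}(z)|}{p_1!p_2!\,l_1^{p_1}(z)l_2^{p_2}(z)}\le\max\{\frac{|F^{(k_1,k_2)}(z)|}{k_1!k_2!\,l_1^{k_1}(z)l_2^{k_2}(z)}:0\le k_1+k_2\le n_0\}$. $Q^2(\mathbb{D}^2)$ is the class of such $\mathbf{L}$ for which, for all $R=(r_1,r_2)\in[0,\beta]^2$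 and $j=1,2$, $0<\lambda_{1,j}(R)\le\lambda_{2,j}(R)<\infty$, where $\lambda_{1,j}(R)=\inf_{z^0\in\mathbb{D}^2}\inf\{l_j(z)/l_j(z^0): z\in\mathbb{D}^2[z^0,R/\mathbf{L}(z^0)]\}$ and $\lambda_{2,j}(R)=\sup_{z^0\in\mathbb{D}^2}\sup\{l_j(z)/l_j(z^0): z\in\mathbb{D}^2[z^0,R/\mathbf{L}(z^0)]\}$. *)

theory Defs
  imports "HOL-Analysis.Analysis"
begin

definition D2 :: "(complex \<times> complex) set" where
  "D2 = {z. cmod (fst z) < 1 \<and> cmod (snd z) < 1}"

definition pdisc :: "complex \<times> complex \<Rightarrow> real \<Rightarrow> real \<Rightarrow> (complex \<times> complex) set" where
  "pdisc z0 r1 r2 = {z. cmod (fst z - fst z0) \<le> r1 \<and> cmod (snd z - snd z0) \<le> r2}"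

definition analytic_D2 :: "(complex \<times> complex \<Rightarrow> complex) \<Rightarrow> bool" where
  "analytic_D2 F \<longleftrightarrow>
     (\<forall>z\<in>D2. \<exists>c1 c2. (F has_derivative (\<lambda>h. c1 * fst h + c2 * snd h)) (at z))"

definition pderiv2 :: "(complex \<times> complex \<Rightarrow> complex) \<Rightarrow> nat \<Rightarrow> nat \<Rightarrow> complex \<times> complex \<Rightarrow> complex" where
  "pderiv2 F p q z =
     (deriv ^^ p) (\<lambda>w1. (deriv ^^ q) (\<lambda>w2. F (w1, w2)) (snd z)) (fst z)"

definition ndrv :: "(complex \<times> complex \<Rightarrow> complex) \<Rightarrow> (complex \<times> complex \<Rightarrow> real)
     \<Rightarrow> (complex \<times> complex \<Rightarrow> real) \<Rightarrow> nat \<Rightarrow> nat \<Rightarrow> complex \<times> complex \<Rightarrow> real" where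
  "ndrv F l1 l2 p q z =
     cmod (pderiv2 F p q z) / (fact p * fact q * l1 z ^ p * l2 z ^ q)"

definition bounded_L_index_joint :: "(complex \<times> complex \<Rightarrow> complex) \<Rightarrow> (complex \<times> complex \<Rightarrow> real)
     \<Rightarrow> (complex \<times> complex \<Rightarrow> real) \<Rightarrow> bool" where
  "bounded_L_index_joint F l1 l2 \<longleftrightarrow>
     (\<exists>n0::nat. \<forall>z\<in>D2. \<forall>p1 p2::nat.
        ndrv F l1 l2 p1 p2 z \<le> Max {ndrv F l1 l2 k1 k2 z | k1 k2. k1 + k2 \<le> n0})"

text \<open>The set of ratios l(z)/l(z0), z in D2[z0, R/L(z0)]; lambda_1 is its Inf, lambda_2 its Sup.\<close>
definition ratio_set :: "(complex \<times> complex \<Rightarrow> real) \<Rightarrow> (complex \<times> complex \<Rightarrow> real)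
     \<Rightarrow> (complex \<times> complex \<Rightarrow> real) \<Rightarrow> real \<Rightarrow> real \<Rightarrow> real set" where
  "ratio_set l1 l2 l r1 r2 =
     {l z / l z0 | z0 z. z0 \<in> D2 \<and> z \<in> D2 \<and> z \<in> pdisc z0 (r1 / l1 z0) (r2 / l2 z0)}"

text \<open>Class Q^2(D2): for all R in [0,beta]^2, 0 < lambda_1 and lambda_2 < infinity
  (lambda_1 \<le> lambda_2 is automatic since the set is nonempty).\<close>
definition Q2 :: "real \<Rightarrow> (complex \<times> complex \<Rightarrow> real) \<Rightarrow> (complex \<times> complex \<Rightarrow> real) \<Rightarrow> bool" where
  "Q2 \<beta> l1 l2 \<longleftrightarrow>
     (\<forall>r1 r2. 0 \<le> r1 \<and> r1 \<le> \<beta> \<and> 0 \<le> r2 \<and> r2 \<le> \<beta> \<longrightarrow>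
        (\<forall>l\<in>{l1, l2}. 0 < Inf (ratio_set l1 l2 l r1 r2) \<and> bdd_above (ratio_set l1 l2 l r1 r2)))"

end

theory Submission
  imports Defs "HOL-Complex_Analysis.Complex_Analysis"
begin


lemma D2_iff: "z \<in> D2 \<longleftrightarrow> cmod (fst z) < 1 \<and> cmod (snd z) < 1"
  by (simp add: D2_def)

lemma open_D2: "open D2"
proof -
  have "D2 = (fst -` ball 0 1) \<inter> (snd -` ball 0 1)" by (auto simp: D2_def)
  then show ?thesis by (metis open_Int open_ball open_vimage_fst open_vimage_snd)
qed

lemma an_cont: "analytic_D2 F \<Longrightarrow> continuous_on D2 F"
  unfolding analytic_D2_def
  by (meson continuous_at_imp_continuous_on has_derivative_continuous)

lemma an_hol1:
  assumes "analytic_D2 F" "cmod w2 < 1"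
  shows "(\<lambda>w1. F (w1, w2)) holomorphic_on ball 0 1"
proof (subst holomorphic_on_open, simp, intro ballI)
  fix w1 :: complex assume "w1 \<in> ball 0 1"
  then have "(w1, w2) \<in> D2" using assms by (simp add: D2_def)
  then obtain c1 c2 where d: "(F has_derivative (\<lambda>h. c1 * fst h + c2 * snd h)) (at (w1,w2))"
    using assms unfolding analytic_D2_def by blast
  have p: "((\<lambda>w. (w, w2)) has_derivative (\<lambda>h. (h, 0))) (at w1)"
    by (auto intro!: derivative_eq_intros)
  have "((\<lambda>w. F (w, w2)) has_derivative (\<lambda>h. c1 * h)) (at w1)"
    by (rule has_derivative_eq_rhs[OF has_derivative_compose[OF p d]]) auto
  then show "\<exists>f'. ((\<lambda>w1. F (w1, w2)) has_field_derivative f') (at w1)"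
    unfolding has_field_derivative_def by blast
qed

definition swapF :: "(complex \<times> complex \<Rightarrow> complex) \<Rightarrow> complex \<times> complex \<Rightarrow> complex" where
  "swapF F = (\<lambda>z. F (snd z, fst z))"

lemma swap_D2: "prod.swap z \<in> D2 \<longleftrightarrow> z \<in> D2" by (auto simp: D2_def)

lemma an_swap:
  assumes "analytic_D2 F" shows "analytic_D2 (swapF F)"
  unfolding analytic_D2_def
proof
  fix z :: "complex \<times> complex" assume z: "z \<in> D2"
  then have "(snd z, fst z) \<in> D2" by (simp add: D2_def)
  then obtain c1 c2 where d: "(F has_derivative (\<lambda>h. c1 * fst h + c2 * snd h)) (at (snd z, fst z))"
    using assms unfolding analytic_D2_def by blast
  have p: "((\<lambda>z. (snd z, fst z)) has_derivative (\<lambda>h. (snd h, fst h))) (at z)"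
    by (auto intro!: derivative_eq_intros)
  have "((\<lambda>z. F (snd z, fst z)) has_derivative (\<lambda>h. c2 * fst h + c1 * snd h)) (at z)"
    by (rule has_derivative_eq_rhs[OF has_derivative_compose[OF p d]]) (auto simp: add.commute)
  then show "\<exists>c1 c2. (swapF F has_derivative (\<lambda>h. c1 * fst h + c2 * snd h)) (at z)"
    unfolding swapF_def by blast
qed

lemma swapF_swapF[simp]: "swapF (swapF F) = F" by (simp add: swapF_def)

lemma an_hol2:
  assumes "analytic_D2 F" "cmod w1 < 1"
  shows "(\<lambda>w2. F (w1, w2)) holomorphic_on ball 0 1"
  using an_hol1[OF an_swap[OF assms(1)] assms(2)] by (simp add: swapF_def)



lemma circ_in_sphere: "0 \<le> r \<Longrightarrow> circlepath c r t \<in> sphere c r"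
  by (simp add: circlepath dist_norm norm_mult)

lemma PC:
  fixes H :: "'a::topological_space \<Rightarrow> complex \<Rightarrow> complex"
  assumes cont: "continuous_on (U \<times> sphere c r) (\<lambda>(w,u). H w u)" and r: "0 \<le> r"
  shows "continuous_on U (\<lambda>w. contour_integral (circlepath c r) (H w))"
proof -
  have eq: "contour_integral (circlepath c r) (H w) =
      integral (cbox 0 1) (\<lambda>t. H w (circlepath c r t) * (2 * pi * \<i> * r * exp(2 * of_real pi * \<i> * t)))" for w
    by (simp add: contour_integral_integral vector_derivative_circlepath cbox_interval)
  have c1: "continuous_on (U \<times> cbox 0 1) (\<lambda>x. H (fst x) (circlepath c r (snd x)))"
  proof -
    have cm: "continuous_on (U \<times> cbox 0 1) (\<lambda>x. (fst x, circlepath c r (snd x)))"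
      unfolding circlepath by (intro continuous_intros)
    have im: "(\<lambda>x. (fst x, circlepath c r (snd x))) ` (U \<times> cbox 0 1) \<subseteq> U \<times> sphere c r"
      using circ_in_sphere[OF r] by auto
    show ?thesis
      using continuous_on_compose[OF cm continuous_on_subset[OF cont im]] by (simp add: o_def)
  qed
  have c2: "continuous_on (U \<times> cbox 0 1) (\<lambda>(w, t). H w (circlepath c r t) * (2 * pi * \<i> * r * exp(2 * of_real pi * \<i> * t)))"
    unfolding case_prod_beta by (intro continuous_intros c1)
  show ?thesis
    unfolding eq by (rule integral_continuous_on_param[OF c2])
qed

lemma PH:
  fixes H :: "complex \<Rightarrow> complex \<Rightarrow> complex"
  assumes cont: "continuous_on (ball a R \<times> sphere c r) (\<lambda>(w,u). H w u)" and r: "0 < r"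
    and hol: "\<And>u. u \<in> sphere c r \<Longrightarrow> (\<lambda>w. H w u) holomorphic_on ball a R"
  shows "(\<lambda>w. contour_integral (circlepath c r) (H w)) holomorphic_on ball a R"
proof -
  define G where "G = (\<lambda>w. contour_integral (circlepath c r) (H w))"
  have Gc: "continuous_on (ball a R) G"
    unfolding G_def using PC[OF cont] r by simp
  have "G field_differentiable at w" if w: "w \<in> ball a R" for w
  proof -
    define \<rho> where "\<rho> = (dist a w + R) / 2"
    have \<rho>: "dist a w < \<rho>" "\<rho> < R" using w by (auto simp: \<rho>_def)
    have cb: "cball a \<rho> \<subseteq> ball a R" using \<rho> by auto
    have \<rho>0: "0 < \<rho>" using \<rho> zero_le_dist[of a w] by linarith
    have Gcs: "continuous_on (sphere a \<rho>) G"
      by (rule continuous_on_subset[OF Gc]) (use cb in auto)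
    have Hint: "(\<lambda>u. H v u) contour_integrable_on circlepath c r" if "v \<in> ball a R" for v
    proof (rule contour_integrable_continuous_circlepath)
      have "continuous_on ({v} \<times> sphere c r) (\<lambda>(w,u). H w u)"
        by (rule continuous_on_subset[OF cont]) (use that in auto)
      then have "continuous_on (sphere c r) ((\<lambda>(w,u). H w u) \<circ> (\<lambda>u. (v,u)))"
        apply (intro continuous_on_compose)
         apply (auto intro!: continuous_intros)[1]
        apply (erule continuous_on_subset) by auto
      then show "continuous_on (path_image (circlepath c r)) (H v)"
        using r by (simp add: o_def)
    qed
    have rep: "((\<lambda>u. G u / (u - v)) has_contour_integral (2 * pi * \<i> * G v)) (circlepath a \<rho>)"
      if v: "v \<in> ball a \<rho>" for v
    proof -
      define K where "K = (\<lambda>\<xi> u. H \<xi> u / (\<xi> - v))"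
      have Kc: "continuous_on (sphere a \<rho> \<times> sphere c r) (\<lambda>(\<xi>,u). K \<xi> u)"
      proof -
        have "continuous_on (sphere a \<rho> \<times> sphere c r) (\<lambda>(w,u). H w u)"
          by (rule continuous_on_subset[OF cont]) (use cb in auto)
        moreover have "\<forall>x\<in>sphere a \<rho> \<times> sphere c r. fst x - v \<noteq> 0"
          using v by (auto simp: dist_norm)
        ultimately show ?thesis unfolding K_def case_prod_beta
          by (intro continuous_intros) auto
      qed
      have cauchy: "H v u = contour_integral (circlepath a \<rho>) (\<lambda>\<xi>. K \<xi> u) / (2 * pi * \<i>)"
        if u: "u \<in> sphere c r" for u
      proof -
        have hb: "(\<lambda>w. H w u) holomorphic_on ball a R" using hol[OF u] .
        have "((\<lambda>\<xi>. H \<xi> u / (\<xi> - v)) has_contour_integral (2 * of_real pi * \<i> * H v u)) (circlepath a \<rho>)"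
        proof (rule Cauchy_integral_circlepath)
          show "continuous_on (cball a \<rho>) (\<lambda>w. H w u)"
            using holomorphic_on_subset[OF hb cb] holomorphic_on_imp_continuous_on by blast
          show "(\<lambda>w. H w u) holomorphic_on ball a \<rho>"
            using holomorphic_on_subset[OF hb] cb ball_subset_cball by blast
          show "cmod (v - a) < \<rho>" using v by (simp add: dist_norm norm_minus_commute)
        qed
        then show ?thesis unfolding K_def
          using contour_integral_unique by fastforce
      qed
      have "G v = contour_integral (circlepath c r) (\<lambda>u. contour_integral (circlepath a \<rho>) (\<lambda>\<xi>. K \<xi> u) / (2 * pi * \<i>))"
        unfolding G_def using r by (intro contour_integral_eq) (simp add: cauchy)
      also have "\<dots> = contour_integral (circlepath c r) (\<lambda>u. contour_integral (circlepath a \<rho>) (\<lambda>\<xi>. K \<xi> u)) / (2 * pi * \<i>)"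
      proof (rule contour_integral_div)
        have "continuous_on (sphere c r) (\<lambda>u. contour_integral (circlepath a \<rho>) (\<lambda>\<xi>. K \<xi> u))"
        proof (rule PC)
          show "continuous_on (sphere c r \<times> sphere a \<rho>) (\<lambda>(w, u). K u w)"
            using continuous_on_swap_args[OF Kc] by simp
        qed (use \<rho> zero_le_dist[of a w] in linarith)
        then show "(\<lambda>u. contour_integral (circlepath a \<rho>) (\<lambda>\<xi>. K \<xi> u)) contour_integrable_on circlepath c r"
          using r by (intro contour_integrable_continuous_circlepath) simp
      qed
      also have "contour_integral (circlepath c r) (\<lambda>u. contour_integral (circlepath a \<rho>) (\<lambda>\<xi>. K \<xi> u))
          = contour_integral (circlepath a \<rho>) (\<lambda>\<xi>. contour_integral (circlepath c r) (K \<xi>))"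
      proof (rule contour_integral_swap[symmetric])
        show "continuous_on (path_image (circlepath a \<rho>) \<times> path_image (circlepath c r)) (\<lambda>(y1, y2). K y1 y2)"
          using Kc \<rho>0 r by simp
        show "continuous_on {0..1} (\<lambda>t. vector_derivative (circlepath a \<rho>) (at t))"
          unfolding vector_derivative_circlepath by (intro continuous_intros)
        show "continuous_on {0..1} (\<lambda>t. vector_derivative (circlepath c r) (at t))"
          unfolding vector_derivative_circlepath by (intro continuous_intros)
      qed auto
      also have "\<dots> = contour_integral (circlepath a \<rho>) (\<lambda>\<xi>. G \<xi> / (\<xi> - v))"
      proof (rule contour_integral_eq)
        fix \<xi> assume "\<xi> \<in> path_image (circlepath a \<rho>)"
        then have "\<xi> \<in> ball a R" using \<rho> \<rho>0 cb by auto
        then show "contour_integral (circlepath c r) (K \<xi>) = G \<xi> / (\<xi> - v)"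
          unfolding K_def G_def using contour_integral_div[OF Hint] by simp
      qed
      finally have "G v = contour_integral (circlepath a \<rho>) (\<lambda>\<xi>. G \<xi> / (\<xi> - v)) / (2 * pi * \<i>)" .
      moreover have "(\<lambda>\<xi>. G \<xi> / (\<xi> - v)) contour_integrable_on circlepath a \<rho>"
      proof (rule contour_integrable_continuous_circlepath)
        have "\<forall>x\<in>sphere a \<rho>. x - v \<noteq> 0" using v by (auto simp: dist_norm)
        then show "continuous_on (path_image (circlepath a \<rho>)) (\<lambda>\<xi>. G \<xi> / (\<xi> - v))"
          using \<rho> \<rho>0 Gcs by (auto intro!: continuous_intros)
      qed
      ultimately show ?thesis
        using has_contour_integral_integral by (simp add: field_simps)
    qed
    have "(\<lambda>v. complex_of_real (2 * pi) * \<i> * G v) field_differentiable at w"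
      unfolding field_differentiable_def
      apply (rule exI)
      apply (rule Cauchy_next_derivative_circlepath(2)[where z=a and r=\<rho> and f=G and g="\<lambda>v. complex_of_real (2 * pi) * \<i> * G v" and k=1 and w=w])
      using Gcs rep \<rho> \<rho>0 by (auto simp: dist_commute)
    then have "(\<lambda>v. (1 / (complex_of_real (2 * pi) * \<i>)) * (complex_of_real (2 * pi) * \<i> * G v)) field_differentiable at w"
      by (rule field_differentiable_mult[OF field_differentiable_const])
    moreover have "(\<lambda>v. (1 / (complex_of_real (2 * pi) * \<i>)) * (complex_of_real (2 * pi) * \<i> * G v)) = G"
      by (rule ext) (simp add: field_simps)
    ultimately show ?thesis by simp
  qed
  then show ?thesis unfolding G_def[symmetric]
    by (simp add: holomorphic_on_open field_differentiable_def[symmetric] open_ball)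
qed



definition dq :: "(complex \<times> complex \<Rightarrow> complex) \<Rightarrow> nat \<Rightarrow> complex \<Rightarrow> complex \<Rightarrow> complex" where
  "dq F q w1 w2 = (deriv ^^ q) (\<lambda>w. F (w1, w)) w2"

lemma pderiv2_dq: "pderiv2 F p q z = (deriv ^^ p) (\<lambda>w1. dq F q w1 (snd z)) (fst z)"
  by (simp add: pderiv2_def dq_def)

lemma sub_D2: "cmod a < 1 \<Longrightarrow> cmod b < 1 \<Longrightarrow> (a, b) \<in> D2" by (simp add: D2_def)

lemma cont_on_F:
  assumes "analytic_D2 F" "S \<subseteq> D2"
  shows "continuous_on S F"
  using an_cont[OF assms(1)] assms(2) continuous_on_subset by blast

lemma dq_rep:
  assumes an: "analytic_D2 F" and w1: "cmod w1 < 1" and w2: "cmod w2 < r" and r: "r < 1"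
  shows "(\<lambda>u. F (w1, u) / (u - w2) ^ Suc q) contour_integrable_on circlepath 0 r"
    and "dq F q w1 w2 = fact q / (2 * pi * \<i>) * contour_integral (circlepath 0 r) (\<lambda>u. F (w1, u) / (u - w2) ^ Suc q)"
proof -
  have h: "(\<lambda>u. F (w1, u)) holomorphic_on ball 0 1" by (rule an_hol2[OF an w1])
  have cb: "cball 0 r \<subseteq> ball (0::complex) 1" using r by auto
  have c: "continuous_on (cball 0 r) (\<lambda>u. F (w1, u))"
    using holomorphic_on_imp_continuous_on[OF holomorphic_on_subset[OF h cb]] .
  have hb: "(\<lambda>u. F (w1, u)) holomorphic_on ball 0 r"
    using holomorphic_on_subset[OF h] cb ball_subset_cball by blast
  have w: "w2 \<in> ball 0 r" using w2 by simp
  show "(\<lambda>u. F (w1, u) / (u - w2) ^ Suc q) contour_integrable_on circlepath 0 r"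
    by (rule Cauchy_higher_derivative_integral_circlepath(1)[OF c hb w])
  show "dq F q w1 w2 = fact q / (2 * pi * \<i>) * contour_integral (circlepath 0 r) (\<lambda>u. F (w1, u) / (u - w2) ^ Suc q)"
    unfolding dq_def by (rule Cauchy_higher_derivative_integral_circlepath(2)[OF c hb w])
qed

lemma dq_hol:
  assumes an: "analytic_D2 F" and w2: "cmod w2 < 1"
  shows "(\<lambda>w1. dq F q w1 w2) holomorphic_on ball 0 1"
proof -
  define r where "r = (1 + cmod w2) / 2"
  have r: "cmod w2 < r" "r < 1" "0 < r" using w2 by (auto simp: r_def add_pos_nonneg)
  define H where "H = (\<lambda>w u. F (w, u) / (u - w2) ^ Suc q)"
  have "(\<lambda>w. contour_integral (circlepath 0 r) (H w)) holomorphic_on ball 0 1"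
  proof (rule PH)
    have Fc: "continuous_on (ball 0 1 \<times> sphere 0 r) F"
      by (rule cont_on_F[OF an]) (use r in \<open>auto simp: D2_def\<close>)
    show "continuous_on (ball 0 1 \<times> sphere 0 r) (\<lambda>(w, u). H w u)"
      unfolding H_def case_prod_beta prod.collapse
      by (intro continuous_on_divide Fc continuous_intros) (use r in auto)
    fix u :: complex assume "u \<in> sphere 0 r"
    then have u: "cmod u < 1" "u - w2 \<noteq> 0" using r by auto
    show "(\<lambda>w. H w u) holomorphic_on ball 0 1"
      unfolding H_def using an_hol1[OF an u(1)] u(2) by (auto intro!: holomorphic_intros)
  qed (use r in auto)
  then have "(\<lambda>w. fact q / (2 * pi * \<i>) * contour_integral (circlepath 0 r) (H w)) holomorphic_on ball 0 1"
    by (auto intro!: holomorphic_intros)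
  then show ?thesis
    by (rule holomorphic_transform) (use dq_rep(2)[OF an _ r(1,2)] in \<open>auto simp: H_def\<close>)
qed

lemma dbl:
  assumes an: "analytic_D2 F" and z1: "cmod z1 < r1" "r1 < 1" and z2: "cmod z2 < r2" "r2 < 1"
  shows "pderiv2 F p q (z1, z2) = (fact p * fact q / (2 * pi * \<i>)^2) *
     contour_integral (circlepath 0 r1) (\<lambda>\<xi>. contour_integral (circlepath 0 r2)
        (\<lambda>u. F (\<xi>, u) / ((\<xi> - z1) ^ Suc p * (u - z2) ^ Suc q)))"
proof -
  define G where "G = (\<lambda>w1. dq F q w1 z2)"
  define K where "K = (\<lambda>\<xi> u. F (\<xi>, u) / ((\<xi> - z1) ^ Suc p * (u - z2) ^ Suc q))"
  have z2': "cmod z2 < 1" using z2 by simp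
  have h: "G holomorphic_on ball 0 1" unfolding G_def by (rule dq_hol[OF an z2'])
  have cb: "cball 0 r1 \<subseteq> ball (0::complex) 1" using z1 by auto
  have c: "continuous_on (cball 0 r1) G"
    using holomorphic_on_imp_continuous_on[OF holomorphic_on_subset[OF h cb]] .
  have hb: "G holomorphic_on ball 0 r1"
    using holomorphic_on_subset[OF h] cb ball_subset_cball by blast
  have w: "z1 \<in> ball 0 r1" using z1 by simp
  have r1: "0 < r1" "0 \<le> r1" using z1 norm_ge_zero[of z1] by linarith+
  have r2: "0 < r2" "0 \<le> r2" using z2 norm_ge_zero[of z2] by linarith+
  have "pderiv2 F p q (z1, z2) = (deriv ^^ p) G z1"
    by (simp add: pderiv2_dq G_def)
  also have "\<dots> = fact p / (2 * pi * \<i>) * contour_integral (circlepath 0 r1) (\<lambda>\<xi>. G \<xi> / (\<xi> - z1) ^ Suc p)"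
    by (rule Cauchy_higher_derivative_integral_circlepath(2)[OF c hb w])
  also have "contour_integral (circlepath 0 r1) (\<lambda>\<xi>. G \<xi> / (\<xi> - z1) ^ Suc p)
      = contour_integral (circlepath 0 r1) (\<lambda>\<xi>. fact q / (2 * pi * \<i>) * contour_integral (circlepath 0 r2) (K \<xi>))"
  proof (rule contour_integral_eq)
    fix \<xi> assume "\<xi> \<in> path_image (circlepath 0 r1)"
    then have \<xi>: "cmod \<xi> < 1" using r1 z1 by auto
    have "G \<xi> / (\<xi> - z1) ^ Suc p = fact q / (2 * pi * \<i>) *
        (contour_integral (circlepath 0 r2) (\<lambda>u. F (\<xi>, u) / (u - z2) ^ Suc q) / (\<xi> - z1) ^ Suc p)"
      unfolding G_def dq_rep(2)[OF an \<xi> z2] by simp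
    also have "contour_integral (circlepath 0 r2) (\<lambda>u. F (\<xi>, u) / (u - z2) ^ Suc q) / (\<xi> - z1) ^ Suc p
        = contour_integral (circlepath 0 r2) (\<lambda>u. F (\<xi>, u) / (u - z2) ^ Suc q / (\<xi> - z1) ^ Suc p)"
      by (rule contour_integral_div[symmetric, OF dq_rep(1)[OF an \<xi> z2]])
    also have "\<dots> = contour_integral (circlepath 0 r2) (K \<xi>)"
      unfolding K_def by (simp add: field_simps)
    finally show "G \<xi> / (\<xi> - z1) ^ Suc p = fact q / (2 * pi * \<i>) * contour_integral (circlepath 0 r2) (K \<xi>)" .
  qed
  also have "\<dots> = fact q / (2 * pi * \<i>) * contour_integral (circlepath 0 r1) (\<lambda>\<xi>. contour_integral (circlepath 0 r2) (K \<xi>))"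
  proof (rule contour_integral_lmul)
    have Kc: "continuous_on (sphere 0 r1 \<times> sphere 0 r2) (\<lambda>(\<xi>,u). K \<xi> u)"
    proof -
      have "continuous_on (sphere 0 r1 \<times> sphere 0 r2) F"
        by (rule cont_on_F[OF an]) (use z1 z2 in \<open>auto simp: D2_def\<close>)
      moreover have "\<forall>x\<in>sphere 0 r1 \<times> sphere 0 r2. (fst x - z1) ^ Suc p * (snd x - z2) ^ Suc q \<noteq> 0"
        using z1 z2 by auto
      ultimately show ?thesis unfolding K_def case_prod_beta by (auto intro!: continuous_intros)
    qed
    have "continuous_on (sphere 0 r1) (\<lambda>\<xi>. contour_integral (circlepath 0 r2) (K \<xi>))"
      by (rule PC[OF Kc r2(2)])
    then show "(\<lambda>\<xi>. contour_integral (circlepath 0 r2) (K \<xi>)) contour_integrable_on circlepath 0 r1"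
      using r1 by (intro contour_integrable_continuous_circlepath) simp
  qed
  finally show ?thesis unfolding K_def by (simp add: power2_eq_square)
qed

lemma comm:
  assumes an: "analytic_D2 F" and z: "(z1, z2) \<in> D2"
  shows "pderiv2 F p q (z1, z2) = pderiv2 (swapF F) q p (z2, z1)"
proof -
  define r1 where "r1 = (1 + cmod z1) / 2"
  define r2 where "r2 = (1 + cmod z2) / 2"
  have zz: "cmod z1 < 1" "cmod z2 < 1" using z by (auto simp: D2_def)
  have r: "cmod z1 < r1" "r1 < 1" "cmod z2 < r2" "r2 < 1" using zz by (auto simp: r1_def r2_def)
  have r0: "0 \<le> r1" "0 \<le> r2" using r norm_ge_zero[of z1] norm_ge_zero[of z2] by linarith+
  define K where "K = (\<lambda>\<xi> u. F (\<xi>, u) / ((\<xi> - z1) ^ Suc p * (u - z2) ^ Suc q))"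
  have Kc: "continuous_on (sphere 0 r1 \<times> sphere 0 r2) (\<lambda>(\<xi>,u). K \<xi> u)"
  proof -
    have "continuous_on (sphere 0 r1 \<times> sphere 0 r2) F"
      by (rule cont_on_F[OF an]) (use r in \<open>auto simp: D2_def\<close>)
    moreover have "\<forall>x\<in>sphere 0 r1 \<times> sphere 0 r2. (fst x - z1) ^ Suc p * (snd x - z2) ^ Suc q \<noteq> 0"
      using r by auto
    ultimately show ?thesis unfolding K_def case_prod_beta by (auto intro!: continuous_intros)
  qed
  have "pderiv2 F p q (z1, z2) = (fact p * fact q / (2 * pi * \<i>)^2) *
     contour_integral (circlepath 0 r1) (\<lambda>\<xi>. contour_integral (circlepath 0 r2) (K \<xi>))"
    unfolding K_def by (rule dbl[OF an r])
  also have "contour_integral (circlepath 0 r1) (\<lambda>\<xi>. contour_integral (circlepath 0 r2) (K \<xi>))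
      = contour_integral (circlepath 0 r2) (\<lambda>u. contour_integral (circlepath 0 r1) (\<lambda>\<xi>. K \<xi> u))"
  proof (rule contour_integral_swap)
    show "continuous_on (path_image (circlepath 0 r1) \<times> path_image (circlepath 0 r2)) (\<lambda>(y1, y2). K y1 y2)"
      using Kc r0 by simp
    show "continuous_on {0..1} (\<lambda>t. vector_derivative (circlepath 0 r1) (at t))"
      unfolding vector_derivative_circlepath by (intro continuous_intros)
    show "continuous_on {0..1} (\<lambda>t. vector_derivative (circlepath 0 r2) (at t))"
      unfolding vector_derivative_circlepath by (intro continuous_intros)
  qed auto
  also have "(fact p * fact q / (2 * pi * \<i>)^2) * \<dots> = pderiv2 (swapF F) q p (z2, z1)"
    unfolding dbl[OF an_swap[OF an] r(3,4,1,2)] K_def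
    by (simp add: swapF_def mult.commute)
  finally show ?thesis .
qed



lemma cauchy_est:
  assumes h: "h holomorphic_on ball 0 1" and cb: "cball c \<rho> \<subseteq> ball 0 1" and \<rho>: "0 < \<rho>"
    and M: "\<And>w. w \<in> cball c \<rho> \<Longrightarrow> cmod (h w) \<le> M"
  shows "cmod ((deriv ^^ n) h c) \<le> fact n * M / \<rho> ^ n"
proof (rule Cauchy_inequality[OF _ _ \<rho>])
  show "h holomorphic_on ball c \<rho>" using holomorphic_on_subset[OF h] cb ball_subset_cball by blast
  show "continuous_on (cball c \<rho>) h"
    using holomorphic_on_imp_continuous_on[OF holomorphic_on_subset[OF h cb]] .
  fix x assume "cmod (c - x) = \<rho>"
  then show "cmod (h x) \<le> M" by (intro M) (simp add: dist_norm)
qed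

lemma pderiv2_k0: "pderiv2 F k 0 (w1, w2) = (deriv ^^ k) (\<lambda>w. F (w, w2)) w1"
  by (simp add: pderiv2_def)

lemma est2:
  assumes an: "analytic_D2 F"
    and cb1: "cball a \<rho>1 \<subseteq> ball 0 1" and cb2: "cball b \<rho>2 \<subseteq> ball 0 1"
    and \<rho>: "0 < \<rho>1" "0 < \<rho>2"
    and M: "\<And>z. z \<in> pdisc (a, b) \<rho>1 \<rho>2 \<Longrightarrow> cmod (pderiv2 F k 0 z) \<le> M"
  shows "cmod (pderiv2 F (k + i) j (a, b)) \<le> fact i * fact j * M / (\<rho>1 ^ i * \<rho>2 ^ j)"
proof -
  have a: "cmod a < 1" using cb1 \<rho> by (metis centre_in_cball dist_0_norm less_le mem_ball cb1 subsetD)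
  have b: "cmod b < 1" using cb2 \<rho> by (metis centre_in_cball dist_0_norm less_le mem_ball cb2 subsetD)
  have ab: "(a, b) \<in> D2" using a b by (simp add: D2_def)
  let ?F' = "swapF F"
  have an': "analytic_D2 ?F'" by (rule an_swap[OF an])
  define h where "h = (\<lambda>w2. dq ?F' (k + i) w2 a)"
  have "pderiv2 F (k + i) j (a, b) = pderiv2 ?F' j (k + i) (b, a)" by (rule comm[OF an ab])
  also have "\<dots> = (deriv ^^ j) h b" by (simp add: pderiv2_dq h_def)
  finally have eq: "pderiv2 F (k + i) j (a, b) = (deriv ^^ j) h b" .
  have hh: "h holomorphic_on ball 0 1" unfolding h_def by (rule dq_hol[OF an' a])
  have hb: "cmod (h w2) \<le> fact i * M / \<rho>1 ^ i" if w2: "w2 \<in> cball b \<rho>2" for w2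
  proof -
    have w2': "cmod w2 < 1" using cb2 w2 by auto
    define g where "g = (deriv ^^ k) (\<lambda>w. F (w, w2))"
    have "h w2 = (deriv ^^ (i + k)) (\<lambda>w. F (w, w2)) a"
      by (simp add: h_def dq_def swapF_def add.commute)
    also have "\<dots> = (deriv ^^ i) g a" by (simp add: g_def funpow_add)
    finally have hw: "h w2 = (deriv ^^ i) g a" .
    have gh: "g holomorphic_on ball 0 1"
      unfolding g_def by (intro holomorphic_higher_deriv an_hol1[OF an w2'] open_ball)
    have "cmod ((deriv ^^ i) g a) \<le> fact i * M / \<rho>1 ^ i"
    proof (rule cauchy_est[OF gh cb1 \<rho>(1)])
      fix w assume "w \<in> cball a \<rho>1"
      then have "(w, w2) \<in> pdisc (a, b) \<rho>1 \<rho>2" using w2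
        by (simp add: pdisc_def dist_norm norm_minus_commute)
      then show "cmod (g w) \<le> M" using M[of "(w, w2)"] by (simp add: g_def pderiv2_k0)
    qed
    then show ?thesis using hw by simp
  qed
  have "cmod ((deriv ^^ j) h b) \<le> fact j * (fact i * M / \<rho>1 ^ i) / \<rho>2 ^ j"
    by (rule cauchy_est[OF hh cb2 \<rho>(2) hb])
  then show ?thesis using eq by (simp add: field_simps)
qed

lemma taylor_bd:
  assumes g: "g holomorphic_on ball a R" and b: "cmod (b - a) < R"
    and bd: "\<And>s. cmod ((deriv ^^ s) g a) * cmod (b - a) ^ s / fact s \<le> C * (1/2) ^ s"
  shows "cmod (g b) \<le> 2 * C"
proof -
  have "b \<in> ball a R" using b by (simp add: dist_norm norm_minus_commute)
  then have s: "(\<lambda>n. (deriv ^^ n) g a / fact n * (b - a) ^ n) sums g b"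
    by (rule holomorphic_power_series[OF g])
  have "cmod (suminf (\<lambda>n. (deriv ^^ n) g a / fact n * (b - a) ^ n)) \<le> suminf (\<lambda>n. C * (1/2) ^ n)"
  proof (rule norm_suminf_le)
    fix n
    show "cmod ((deriv ^^ n) g a / fact n * (b - a) ^ n) \<le> C * (1 / 2) ^ n"
      using bd[of n] by (simp add: norm_mult norm_divide norm_power)
  qed (intro summable_mult summable_geometric, simp)
  also have "suminf (\<lambda>n. C * (1/2) ^ n) = 2 * C"
    by (subst suminf_mult) (auto simp: suminf_geometric intro: summable_geometric)
  finally show ?thesis using sums_unique[OF s] by simp
qed

lemma step1:
  assumes an: "analytic_D2 F" and z': "(a, y) \<in> D2" and xa: "cmod (x - a) < 1 - cmod a"
    and bd: "\<And>s. cmod (pderiv2 F (k1 + s) k2 (a, y)) * cmod (x - a) ^ s / fact s \<le> C * (1/2) ^ s"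
  shows "cmod (pderiv2 F k1 k2 (x, y)) \<le> 2 * C"
proof -
  have y: "cmod y < 1" and a: "cmod a < 1" using z' by (auto simp: D2_def)
  define G where "G = (\<lambda>w1. dq F k2 w1 y)"
  define g where "g = (deriv ^^ k1) G"
  have gh: "g holomorphic_on ball 0 1"
    unfolding g_def G_def by (intro holomorphic_higher_deriv dq_hol[OF an y] open_ball)
  have sub: "ball a (1 - cmod a) \<subseteq> ball 0 1"
    by (auto simp: dist_norm) (metis add.commute norm_minus_commute norm_triangle_sub order_le_less_trans less_diff_eq)
  have gd: "(deriv ^^ s) g a = pderiv2 F (k1 + s) k2 (a, y)" for s
  proof -
    have "(deriv ^^ s) g = (deriv ^^ (s + k1)) G" by (simp add: g_def funpow_add)
    then show ?thesis by (simp add: G_def pderiv2_dq add.commute)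
  qed
  have "cmod (g x) \<le> 2 * C"
    by (rule taylor_bd[OF holomorphic_on_subset[OF gh sub] xa]) (simp add: gd bd)
  moreover have "g x = pderiv2 F k1 k2 (x, y)" by (simp add: g_def G_def pderiv2_dq)
  ultimately show ?thesis by simp
qed

lemma step2:
  assumes an: "analytic_D2 F" and z': "(x, b) \<in> D2" and yb: "cmod (y - b) < 1 - cmod b"
    and bd: "\<And>s. cmod (pderiv2 F k1 (k2 + s) (x, b)) * cmod (y - b) ^ s / fact s \<le> C * (1/2) ^ s"
  shows "cmod (pderiv2 F k1 k2 (x, y)) \<le> 2 * C"
proof -
  have b: "cmod b < 1" and x: "cmod x < 1" using z' by (auto simp: D2_def)
  have "cmod y < 1"
    using yb norm_triangle_ineq2[of y b] by linarith
  then have xy: "(x, y) \<in> D2" using x by (simp add: D2_def)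
  have "cmod (pderiv2 (swapF F) k2 k1 (y, x)) \<le> 2 * C"
  proof (rule step1[OF an_swap[OF an] _ yb])
    show "(b, x) \<in> D2" using b x by (simp add: D2_def)
    fix s
    show "cmod (pderiv2 (swapF F) (k2 + s) k1 (b, x)) * cmod (y - b) ^ s / fact s \<le> C * (1 / 2) ^ s"
      using bd[of s] comm[OF an z', of k1 "k2 + s"] by simp
  qed
  then show ?thesis using comm[OF an xy, of k1 k2] by simp
qed



lemma Max_set_fin: "finite {f k1 k2 | k1 k2. k1 + k2 \<le> (n::nat)}"
proof (rule finite_subset[of _ "(\<lambda>(a,b). f a b) ` ({..n} \<times> {..n})"])
  show "{f k1 k2 |k1 k2. k1 + k2 \<le> n} \<subseteq> (\<lambda>(a, b). f a b) ` ({..n} \<times> {..n})"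
    by (auto simp: image_iff)
qed auto

lemma Max_set_ge: "k1 + k2 \<le> n \<Longrightarrow> (f k1 k2::real) \<le> Max {f k1 k2 | k1 k2. k1 + k2 \<le> (n::nat)}"
  by (rule Max_ge[OF Max_set_fin]) blast

lemma fact_add_le: "fact i * fact k \<le> (fact (k + i) :: real)"
proof -
  have "fact k * fact (k + i - k) * ((k + i) choose k) = (fact (k + i) :: nat)"
    by (rule binomial_fact_lemma) simp
  then have "fact k * fact i * ((k + i) choose k) = (fact (k + i) :: nat)" by simp
  moreover have "(k + i) choose k \<ge> 1" by (metis Suc_leI le_add1 zero_less_binomial One_nat_def)
  ultimately have "fact k * fact i \<le> (fact (k + i) :: nat)"
    by (metis mult.right_neutral mult_le_mono2)
  then have "real (fact k * fact i) \<le> real (fact (k + i))" by linarith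
  then show ?thesis by (simp add: mult.commute)
qed

lemma cball_in:
  assumes "l > \<beta> / (1 - cmod a)" "cmod a < 1" "0 < r" "r \<le> \<beta>"
  shows "cball a (r / l) \<subseteq> ball 0 1" and "r / l < 1 - cmod a" and "0 < l"
proof -
  have d: "0 < 1 - cmod a" using assms by simp
  have "r / (1 - cmod a) \<le> \<beta> / (1 - cmod a)" using assms d by (simp add: divide_right_mono)
  then have lr: "r / (1 - cmod a) < l" using assms by linarith
  have rpos: "0 < r / (1 - cmod a)" using assms d by simp
  show l: "0 < l" using lr rpos by linarith
  show rl: "r / l < 1 - cmod a" using lr d l assms(3) by (simp add: field_simps)
  show "cball a (r / l) \<subseteq> ball 0 1"
  proof
    fix w assume "w \<in> cball a (r / l)"
    then have "cmod (w - a) \<le> r / l" by (simp add: dist_norm norm_minus_commute)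
    then show "w \<in> ball 0 1" using rl norm_triangle_ineq2[of w a] by simp
  qed
qed

lemma est2':
  assumes an: "analytic_D2 F"
    and cb1: "cball a \<rho>1 \<subseteq> ball 0 1" and cb2: "cball b \<rho>2 \<subseteq> ball 0 1"
    and \<rho>: "0 < \<rho>1" "0 < \<rho>2"
    and M: "\<And>z. z \<in> pdisc (a, b) \<rho>1 \<rho>2 \<Longrightarrow> cmod (pderiv2 F 0 k z) \<le> M"
  shows "cmod (pderiv2 F i (k + j) (a, b)) \<le> fact i * fact j * M / (\<rho>1 ^ i * \<rho>2 ^ j)"
proof -
  have a: "cmod a < 1" using cb1 \<rho> by (metis centre_in_cball dist_0_norm less_le mem_ball cb1 subsetD)
  have b: "cmod b < 1" using cb2 \<rho> by (metis centre_in_cball dist_0_norm less_le mem_ball cb2 subsetD)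
  have "cmod (pderiv2 (swapF F) (k + j) i (b, a)) \<le> fact j * fact i * M / (\<rho>2 ^ j * \<rho>1 ^ i)"
  proof (rule est2[OF an_swap[OF an] cb2 cb1 \<rho>(2,1)])
    fix z assume z: "z \<in> pdisc (b, a) \<rho>2 \<rho>1"
    obtain w2 w1 where zz: "z = (w2, w1)" by (cases z)
    have "w2 \<in> cball b \<rho>2" "w1 \<in> cball a \<rho>1" using z zz by (auto simp: pdisc_def dist_norm norm_minus_commute)
    then have w: "(w1, w2) \<in> D2" "(w1, w2) \<in> pdisc (a, b) \<rho>1 \<rho>2" using cb1 cb2 z zz
      by (auto simp: D2_def pdisc_def)
    have "pderiv2 (swapF F) k 0 z = pderiv2 F 0 k (w1, w2)"
      using comm[OF an w(1), of 0 k] zz by simp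
    then show "cmod (pderiv2 (swapF F) k 0 z) \<le> M" using M[OF w(2)] by simp
  qed
  moreover have "pderiv2 F i (k + j) (a, b) = pderiv2 (swapF F) (k + j) i (b, a)"
    by (rule comm[OF an]) (simp add: D2_def a b)
  ultimately show ?thesis by (simp add: mult.commute)
qed

lemma part2:
  fixes \<beta> :: real and l1 l2 :: "complex \<times> complex \<Rightarrow> real"
    and F :: "complex \<times> complex \<Rightarrow> complex"
  assumes beta: "\<beta> > 1"
    and low1: "\<forall>z\<in>D2. l1 z > \<beta> / (1 - cmod (fst z))"
    and low2: "\<forall>z\<in>D2. l2 z > \<beta> / (1 - cmod (snd z))"
    and an: "analytic_D2 F"
    and H: "\<forall>r1 r2. 0 < r1 \<and> r1 \<le> \<beta> \<and> 0 < r2 \<and> r2 \<le> \<beta> \<longrightarrow>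
        (\<exists>n0::nat. \<exists>p::real. p \<ge> 1 \<and>
          (\<forall>z0\<in>D2. \<exists>k1 k2::nat. k1 \<le> n0 \<and> k2 \<le> n0 \<and>
             (\<forall>z\<in>pdisc z0 (r1 / l1 z0) (r2 / l2 z0).
                cmod (pderiv2 F k1 0 z) \<le> p * cmod (pderiv2 F k1 0 z0)) \<and>
             (\<forall>z\<in>pdisc z0 (r1 / l1 z0) (r2 / l2 z0).
                cmod (pderiv2 F 0 k2 z) \<le> p * cmod (pderiv2 F 0 k2 z0))))"
  shows "bounded_L_index_joint F l1 l2"
proof -
  have bb: "0 < \<beta> \<and> \<beta> \<le> \<beta> \<and> 0 < \<beta> \<and> \<beta> \<le> \<beta>" using beta by simp
  obtain n0 p where p: "p \<ge> 1" and Hz: "\<forall>z0\<in>D2. \<exists>k1 k2::nat. k1 \<le> n0 \<and> k2 \<le> n0 \<and>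
             (\<forall>z\<in>pdisc z0 (\<beta> / l1 z0) (\<beta> / l2 z0).
                cmod (pderiv2 F k1 0 z) \<le> p * cmod (pderiv2 F k1 0 z0)) \<and>
             (\<forall>z\<in>pdisc z0 (\<beta> / l1 z0) (\<beta> / l2 z0).
                cmod (pderiv2 F 0 k2 z) \<le> p * cmod (pderiv2 F 0 k2 z0))"
    using H[rule_format, OF bb] by blast
  obtain N where N: "p < \<beta> ^ N" using real_arch_pow[OF beta] by blast
  show ?thesis unfolding bounded_L_index_joint_def
  proof (intro exI[of _ "2 * n0 + N"] ballI allI)
    fix z0 and P1 P2 :: nat assume z0: "z0 \<in> D2"
    obtain a b where ab: "z0 = (a, b)" by (cases z0)
    have a: "cmod a < 1" and b: "cmod b < 1" using z0 ab by (auto simp: D2_def)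
    have la: "l1 z0 > \<beta> / (1 - cmod a)" using low1 z0 ab by auto
    have lb: "l2 z0 > \<beta> / (1 - cmod b)" using low2 z0 ab by auto
    have b0: "0 < \<beta>" using beta by simp
    note c1 = cball_in[OF la a b0 order_refl] and c2 = cball_in[OF lb b b0 order_refl]
    define L1 where "L1 = l1 z0"
    define L2 where "L2 = l2 z0"
    have L: "0 < L1" "0 < L2" using c1(3) c2(3) by (auto simp: L1_def L2_def)
    obtain k1 k2 where k: "k1 \<le> n0" "k2 \<le> n0"
      and K1: "\<forall>z\<in>pdisc z0 (\<beta> / l1 z0) (\<beta> / l2 z0). cmod (pderiv2 F k1 0 z) \<le> p * cmod (pderiv2 F k1 0 z0)"
      and K2: "\<forall>z\<in>pdisc z0 (\<beta> / l1 z0) (\<beta> / l2 z0). cmod (pderiv2 F 0 k2 z) \<le> p * cmod (pderiv2 F 0 k2 z0)"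
      using Hz z0 by blast
    let ?S = "{ndrv F l1 l2 k1 k2 z0 | k1 k2. k1 + k2 \<le> 2 * n0 + N}"
    have \<rho>: "0 < \<beta> / L1" "0 < \<beta> / L2" using L b0 by auto
    have A1: "ndrv F l1 l2 (k1 + i) j z0 * \<beta> ^ (i + j) \<le> p * ndrv F l1 l2 k1 0 z0" for i j
    proof -
      have e: "cmod (pderiv2 F (k1 + i) j (a, b)) \<le> fact i * fact j * (p * cmod (pderiv2 F k1 0 z0)) / ((\<beta>/L1) ^ i * (\<beta>/L2) ^ j)"
        unfolding L1_def L2_def by (rule est2[OF an c1(1) c2(1)]) (use K1 ab \<rho> in \<open>auto simp: L1_def L2_def\<close>)
      define X where "X = cmod (pderiv2 F k1 0 z0)"
      have X0: "0 \<le> X" by (simp add: X_def)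
      have e': "cmod (pderiv2 F (k1 + i) j z0) * \<beta> ^ (i + j) \<le> fact i * fact j * p * X * L1 ^ i * L2 ^ j"
        using e L b0 ab by (simp add: X_def field_simps power_add power_divide)
      have "ndrv F l1 l2 (k1 + i) j z0 * \<beta> ^ (i + j) =
          cmod (pderiv2 F (k1 + i) j z0) * \<beta> ^ (i + j) / (fact (k1 + i) * fact j * L1 ^ (k1 + i) * L2 ^ j)"
        by (simp add: ndrv_def L1_def L2_def)
      also have "\<dots> \<le> fact i * fact j * p * X * L1 ^ i * L2 ^ j / (fact (k1 + i) * fact j * L1 ^ (k1 + i) * L2 ^ j)"
        using L by (intro divide_right_mono e') auto
      also have "\<dots> = fact i * p * X / (fact (k1 + i) * L1 ^ k1)"
        using L by (simp add: field_simps power_add)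
      also have "\<dots> \<le> fact i * p * X / (fact i * fact k1 * L1 ^ k1)"
        using L p X0 fact_add_le[of i k1] by (intro divide_left_mono mult_right_mono) auto
      also have "\<dots> = p * ndrv F l1 l2 k1 0 z0"
        by (simp add: ndrv_def X_def L1_def)
      finally show ?thesis .
    qed
    have A2: "ndrv F l1 l2 i (k2 + j) z0 * \<beta> ^ (i + j) \<le> p * ndrv F l1 l2 0 k2 z0" for i j
    proof -
      have e: "cmod (pderiv2 F i (k2 + j) (a, b)) \<le> fact i * fact j * (p * cmod (pderiv2 F 0 k2 z0)) / ((\<beta>/L1) ^ i * (\<beta>/L2) ^ j)"
        unfolding L1_def L2_def by (rule est2'[OF an c1(1) c2(1)]) (use K2 ab \<rho> in \<open>auto simp: L1_def L2_def\<close>)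
      define X where "X = cmod (pderiv2 F 0 k2 z0)"
      have X0: "0 \<le> X" by (simp add: X_def)
      have e': "cmod (pderiv2 F i (k2 + j) z0) * \<beta> ^ (i + j) \<le> fact i * fact j * p * X * L1 ^ i * L2 ^ j"
        using e L b0 ab by (simp add: X_def field_simps power_add power_divide)
      have "ndrv F l1 l2 i (k2 + j) z0 * \<beta> ^ (i + j) =
          cmod (pderiv2 F i (k2 + j) z0) * \<beta> ^ (i + j) / (fact i * fact (k2 + j) * L1 ^ i * L2 ^ (k2 + j))"
        by (simp add: ndrv_def L1_def L2_def)
      also have "\<dots> \<le> fact i * fact j * p * X * L1 ^ i * L2 ^ j / (fact i * fact (k2 + j) * L1 ^ i * L2 ^ (k2 + j))"
        using L by (intro divide_right_mono e') auto
      also have "\<dots> = fact j * p * X / (fact (k2 + j) * L2 ^ k2)"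
        using L by (simp add: field_simps power_add)
      also have "\<dots> \<le> fact j * p * X / (fact j * fact k2 * L2 ^ k2)"
        using L p X0 fact_add_le[of j k2] by (intro divide_left_mono mult_right_mono) auto
      also have "\<dots> = p * ndrv F l1 l2 0 k2 z0"
        by (simp add: ndrv_def X_def L2_def)
      finally show ?thesis .
    qed
    have nn: "0 \<le> ndrv F l1 l2 m1 m2 z0" for m1 m2
      using L by (simp add: ndrv_def L1_def L2_def)
    have pow: "p \<le> \<beta> ^ m" if "N \<le> m" for m
      using N power_increasing[OF that, of \<beta>] beta by linarith
    show "ndrv F l1 l2 P1 P2 z0 \<le> Max ?S"
    proof (cases "k1 \<le> P1")
      case True
      define i where "i = P1 - k1"
      have P1: "P1 = k1 + i" using True by (simp add: i_def)
      show ?thesis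
      proof (cases "N \<le> i + P2")
        case True
        have "ndrv F l1 l2 P1 P2 z0 * p \<le> ndrv F l1 l2 P1 P2 z0 * \<beta> ^ (i + P2)"
          using pow[OF True] nn by (intro mult_left_mono) auto
        also have "\<dots> \<le> p * ndrv F l1 l2 k1 0 z0" using A1[of i P2] P1 by simp
        finally have "ndrv F l1 l2 P1 P2 z0 \<le> ndrv F l1 l2 k1 0 z0" using p by (simp add: mult.commute)
        also have "\<dots> \<le> Max ?S" by (rule Max_set_ge) (use k in simp)
        finally show ?thesis .
      next
        case False
        then show ?thesis using k P1 by (intro Max_set_ge) linarith
      qed
    next
      case F1: False
      show ?thesis
      proof (cases "k2 \<le> P2")
        case True
        define j where "j = P2 - k2"
        have P2: "P2 = k2 + j" using True by (simp add: j_def)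
        show ?thesis
        proof (cases "N \<le> P1 + j")
          case True
          have "ndrv F l1 l2 P1 P2 z0 * p \<le> ndrv F l1 l2 P1 P2 z0 * \<beta> ^ (P1 + j)"
            using pow[OF True] nn by (intro mult_left_mono) auto
          also have "\<dots> \<le> p * ndrv F l1 l2 0 k2 z0" using A2[of P1 j] P2 by simp
          finally have "ndrv F l1 l2 P1 P2 z0 \<le> ndrv F l1 l2 0 k2 z0" using p by (simp add: mult.commute)
          also have "\<dots> \<le> Max ?S" by (rule Max_set_ge) (use k in simp)
          finally show ?thesis .
        next
          case False
          then show ?thesis using k P2 by (intro Max_set_ge) linarith
        qed
      next
        case False
        then show ?thesis using k F1 by (intro Max_set_ge) linarith
      qed
    qed
  qed
qed



lemma fact_binom_le: "(fact (k + s) :: real) \<le> fact k * fact s * 2 ^ (k + s)"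
proof -
  have "fact k * fact (k + s - k) * ((k + s) choose k) = (fact (k + s) :: nat)"
    by (rule binomial_fact_lemma) simp
  then have e: "fact k * fact s * ((k + s) choose k) = (fact (k + s) :: nat)" by simp
  have "(k + s) choose k \<le> 2 ^ (k + s)" by (rule binomial_le_pow2)
  then have "fact k * fact s * ((k + s) choose k) \<le> fact k * fact s * (2::nat) ^ (k + s)"
    by (intro mult_le_mono2)
  then have "fact (k + s) \<le> fact k * fact s * (2::nat) ^ (k + s)" using e by simp
  then have "real (fact (k + s)) \<le> real (fact k * fact s * 2 ^ (k + s))" by linarith
  then show ?thesis by simp
qed

lemma shrink:
  fixes x a :: complex and \<rho> :: real and m :: nat
  assumes "cmod (x - a) \<le> (real m + 1) * \<rho>" "0 \<le> \<rho>"
  shows "\<exists>x'. cmod (x' - a) \<le> real m * \<rho> \<and> cmod (x - x') \<le> \<rho>"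
proof (cases "cmod (x - a) \<le> real m * \<rho>")
  case True
  then show ?thesis using assms by (intro exI[of _ x]) auto
next
  case False
  define c where "c = real m * \<rho>"
  have c0: "0 \<le> c" using assms by (simp add: c_def)
  define d where "d = cmod (x - a)"
  have dc: "c < d" using False by (simp add: c_def d_def)
  have d0: "0 < d" using dc c0 by linarith
  define x' where "x' = a + of_real (c / d) * (x - a)"
  have e: "x' - a = of_real (c / d) * (x - a)" by (simp add: x'_def)
  have "cmod (x' - a) = \<bar>c / d\<bar> * d" unfolding e norm_mult norm_of_real d_def ..
  then have 1: "cmod (x' - a) = c" using d0 c0 by simp
  have e2: "x - x' = of_real (1 - c / d) * (x - a)" by (simp add: x'_def algebra_simps)
  have "cmod (x - x') = \<bar>1 - c / d\<bar> * d" unfolding e2 norm_mult norm_of_real d_def ..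
  also have "\<dots> = (1 - c / d) * d" using dc d0 by simp
  also have "\<dots> = d - c" using d0 by (simp add: field_simps)
  also have "\<dots> \<le> \<rho>" using assms(1) by (simp add: d_def c_def algebra_simps)
  finally show ?thesis using 1 by (intro exI[of _ x']) (simp add: c_def)
qed

lemma tay_arith:
  fixes A M La Lb la lb hi \<delta> :: real and k k' s N :: nat
  assumes A: "A \<le> M * (fact (k + s) * fact k' * la ^ (k + s) * lb ^ k')"
    and M: "0 \<le> M" and La: "0 < La" and Lb: "0 < Lb"
    and la: "0 \<le> la" "la \<le> hi * La" and lb: "0 \<le> lb" "lb \<le> hi * Lb"
    and \<delta>: "0 \<le> \<delta>" "2 * hi * (La * \<delta>) \<le> 1/2" and hi: "1 \<le> hi" and kN: "k + k' \<le> N"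
  shows "A * \<delta> ^ s / fact s \<le> (M * fact k * fact k' * La ^ k * Lb ^ k' * (2 * hi) ^ N) * (1/2) ^ s"
proof -
  have fs: "0 < (fact s :: real)" by simp
  have "A * \<delta> ^ s \<le> M * (fact (k + s) * fact k' * la ^ (k + s) * lb ^ k') * \<delta> ^ s"
    using A \<delta> by (intro mult_right_mono) auto
  also have "\<dots> \<le> M * ((fact k * fact s * 2 ^ (k + s)) * fact k' * (hi * La) ^ (k + s) * (hi * Lb) ^ k') * \<delta> ^ s"
    using M la lb \<delta> fact_binom_le[of k s]
    by (intro mult_right_mono mult_left_mono mult_mono power_mono) auto
  also have "\<dots> = fact s * ((M * fact k * fact k' * La ^ k * Lb ^ k') * (2 ^ k * hi ^ (k + k')) * (2 * hi * (La * \<delta>)) ^ s)"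
    by (simp add: power_add power_mult_distrib algebra_simps)
  also have "\<dots> \<le> fact s * ((M * fact k * fact k' * La ^ k * Lb ^ k') * (2 * hi) ^ N * (1/2) ^ s)"
  proof -
    have "2 ^ k * hi ^ (k + k') \<le> (2::real) ^ N * hi ^ N"
      using hi kN by (intro mult_mono power_increasing) auto
    then have e1: "2 ^ k * hi ^ (k + k') \<le> (2 * hi) ^ N" by (simp add: power_mult_distrib)
    have e2: "(2 * hi * (La * \<delta>)) ^ s \<le> (1/2) ^ s"
      using \<delta> hi La by (intro power_mono) auto
    have X: "0 \<le> M * fact k * fact k' * La ^ k * Lb ^ k'" using M La Lb by simp
    show ?thesis
      using e1 e2 X hi \<delta> La
      by (intro mult_left_mono mult_mono) auto
  qed
  finally show ?thesis using fs by (simp add: field_simps)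
qed



lemma part1:
  fixes \<beta> :: real and l1 l2 :: "complex \<times> complex \<Rightarrow> real"
    and F :: "complex \<times> complex \<Rightarrow> complex"
  assumes beta: "\<beta> > 1"
    and low1: "\<forall>z\<in>D2. l1 z > \<beta> / (1 - cmod (fst z))"
    and low2: "\<forall>z\<in>D2. l2 z > \<beta> / (1 - cmod (snd z))"
    and LQ: "Q2 \<beta> l1 l2"
    and an: "analytic_D2 F"
    and BI: "bounded_L_index_joint F l1 l2"
    and r: "0 < r1" "r1 \<le> \<beta>" "0 < r2" "r2 \<le> \<beta>"
  shows "\<exists>n0::nat. \<exists>p::real. p \<ge> 1 \<and>
          (\<forall>z0\<in>D2. \<exists>k1 k2::nat. k1 + k2 \<le> n0 \<and>
             (\<forall>z\<in>pdisc z0 (r1 / l1 z0) (r2 / l2 z0).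
                cmod (pderiv2 F k1 k2 z) \<le> p * cmod (pderiv2 F k1 k2 z0)))"
proof -
  obtain N where BN: "\<forall>z\<in>D2. \<forall>p1 p2. ndrv F l1 l2 p1 p2 z \<le> Max {ndrv F l1 l2 k1 k2 z | k1 k2. k1 + k2 \<le> N}"
    using BI unfolding bounded_L_index_joint_def by blast
  have b0: "0 < \<beta>" using beta by simp
  have lpos1: "0 < l1 z" if "z \<in> D2" for z
  proof -
    have "0 < \<beta> / (1 - cmod (fst z))" using that b0 by (simp add: D2_def)
    then show ?thesis using low1 that by force
  qed
  have lpos2: "0 < l2 z" if "z \<in> D2" for z
  proof -
    have "0 < \<beta> / (1 - cmod (snd z))" using that b0 by (simp add: D2_def)
    then show ?thesis using low2 that by force
  qed
  define R1 where "R1 = ratio_set l1 l2 l1 \<beta> \<beta>"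
  define R2 where "R2 = ratio_set l1 l2 l2 \<beta> \<beta>"
  have Q: "0 < Inf R1" "bdd_above R1" "0 < Inf R2" "bdd_above R2"
    using LQ b0 unfolding Q2_def R1_def R2_def by auto
  have inR: "l1 z / l1 z0 \<in> R1" "l2 z / l2 z0 \<in> R2"
    if "z0 \<in> D2" "z \<in> D2" "z \<in> pdisc z0 (\<beta> / l1 z0) (\<beta> / l2 z0)" for z0 z
    using that unfolding R1_def R2_def ratio_set_def by blast+
  have bb: "bdd_below R1" "bdd_below R2"
    unfolding R1_def R2_def ratio_set_def
    by (auto intro!: bdd_belowI[of _ 0] simp: lpos1 lpos2 less_imp_le)
  define lo where "lo = min 1 (min (Inf R1) (Inf R2))"
  define hi where "hi = max 1 (max (Sup R1) (Sup R2))"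
  have lo: "0 < lo" "lo \<le> 1" using Q by (auto simp: lo_def)
  have hi: "1 \<le> hi" by (simp add: hi_def)
  have rat: "lo * l1 z0 \<le> l1 z \<and> l1 z \<le> hi * l1 z0 \<and> lo * l2 z0 \<le> l2 z \<and> l2 z \<le> hi * l2 z0"
    if "z0 \<in> D2" "z \<in> D2" "z \<in> pdisc z0 (\<beta> / l1 z0) (\<beta> / l2 z0)" for z0 z
  proof -
    have i1: "Inf R1 \<le> l1 z / l1 z0" by (rule cInf_lower[OF inR(1)[OF that] bb(1)])
    have i2: "Inf R2 \<le> l2 z / l2 z0" by (rule cInf_lower[OF inR(2)[OF that] bb(2)])
    have s1: "l1 z / l1 z0 \<le> Sup R1" by (rule cSup_upper[OF inR(1)[OF that] Q(2)])
    have s2: "l2 z / l2 z0 \<le> Sup R2" by (rule cSup_upper[OF inR(2)[OF that] Q(4)])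
    have p1: "0 < l1 z0" "0 < l2 z0" using lpos1 lpos2 that by auto
    have "lo \<le> l1 z / l1 z0" "lo \<le> l2 z / l2 z0" "l1 z / l1 z0 \<le> hi" "l2 z / l2 z0 \<le> hi"
      using i1 i2 s1 s2 by (auto simp: lo_def hi_def)
    then show ?thesis using p1 by (simp add: pos_le_divide_eq pos_divide_le_eq mult.commute)
  qed
  define q :: nat where "q = nat \<lceil>4 * hi * \<beta>\<rceil> + 1"
  have q: "4 * hi * \<beta> \<le> real q" "hi < real q" "0 < real q"
  proof -
    show q1: "4 * hi * \<beta> \<le> real q" unfolding q_def by linarith
    have "hi < 4 * hi * \<beta>" using hi beta by (simp add: mult_less_cancel_left1 less_trans[of 1 \<beta>] )
    then show "hi < real q" using q1 by linarith
    then show "0 < real q" using hi by linarith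
  qed
  define B where "B = 2 * (2 * hi) ^ N / lo ^ N"
  have B1: "1 \<le> B"
  proof -
    have "1 \<le> (2 * hi) ^ N" by (rule one_le_power) (use hi in simp)
    moreover have "lo ^ N \<le> 1" "0 < lo ^ N" using lo by (auto simp: power_le_one)
    ultimately show ?thesis unfolding B_def by (simp add: le_divide_eq)
  qed
  show ?thesis
  proof (rule exI[of _ N], rule exI[of _ "B ^ (2 * q)"], intro conjI ballI)
    show "1 \<le> B ^ (2 * q)" using B1 by (simp add: one_le_power)
    fix z0 assume z0: "z0 \<in> D2"
    obtain a b where ab: "z0 = (a, b)" by (cases z0)
    define L1 where "L1 = l1 z0"
    define L2 where "L2 = l2 z0"
    have L: "0 < L1" "0 < L2" using lpos1 lpos2 z0 by (auto simp: L1_def L2_def)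
    have ca: "cmod a < 1" "cmod b < 1" using z0 ab by (auto simp: D2_def)
    have la: "L1 > \<beta> / (1 - cmod a)" using low1 z0 ab by (auto simp: L1_def)
    have lb: "L2 > \<beta> / (1 - cmod b)" using low2 z0 ab by (auto simp: L2_def)
    have c1: "\<beta> / L1 < 1 - cmod a" by (rule cball_in(2)[OF la ca(1) b0 order_refl])
    have c2: "\<beta> / L2 < 1 - cmod b" by (rule cball_in(2)[OF lb ca(2) b0 order_refl])
    define \<rho>1 where "\<rho>1 = r1 / (real q * L1)"
    define \<rho>2 where "\<rho>2 = r2 / (real q * L2)"
    have \<rho>: "0 < \<rho>1" "0 < \<rho>2" "real q * \<rho>1 = r1 / L1" "real q * \<rho>2 = r2 / L2"
      using L q r by (auto simp: \<rho>1_def \<rho>2_def)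
    have rL: "r1 / L1 \<le> \<beta> / L1" "r2 / L2 \<le> \<beta> / L2" using r L by (auto simp: divide_right_mono)
    define PD where "PD m1 m2 = pdisc z0 (real m1 * \<rho>1) (real m2 * \<rho>2)" for m1 m2 :: nat
    have PDin: "z \<in> D2 \<and> z \<in> pdisc z0 (\<beta> / l1 z0) (\<beta> / l2 z0)"
      if "m1 \<le> q" "m2 \<le> q" "z \<in> PD m1 m2" for m1 m2 z
    proof -
      have "real m1 * \<rho>1 \<le> real q * \<rho>1" using that(1) \<rho>(1) by (intro mult_right_mono) auto
      moreover have "real m2 * \<rho>2 \<le> real q * \<rho>2" using that(2) \<rho>(2) by (intro mult_right_mono) auto
      ultimately
      have m: "real m1 * \<rho>1 \<le> \<beta> / L1" "real m2 * \<rho>2 \<le> \<beta> / L2" using \<rho> rL by linarith+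
      obtain x y where xy: "z = (x, y)" by (cases z)
      have d: "cmod (x - a) \<le> \<beta> / L1" "cmod (y - b) \<le> \<beta> / L2"
        using that(3) m xy ab by (auto simp: PD_def pdisc_def)
      have "cmod x < 1" using d(1) c1 norm_triangle_ineq2[of x a] by linarith
      moreover have "cmod y < 1" using d(2) c2 norm_triangle_ineq2[of y b] by linarith
      ultimately show ?thesis using d xy ab by (simp add: D2_def pdisc_def L1_def L2_def)
    qed
    define S0 where "S0 = Max {ndrv F l1 l2 k1 k2 z0 | k1 k2. k1 + k2 \<le> N}"
    have S0: "0 \<le> S0"
    proof -
      have "ndrv F l1 l2 0 0 z0 \<le> S0" unfolding S0_def by (rule Max_set_ge) simp
      moreover have "0 \<le> ndrv F l1 l2 0 0 z0" by (simp add: ndrv_def)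
      ultimately show ?thesis by linarith
    qed
    define nd0 where "nd0 k1 k2 z = cmod (pderiv2 F k1 k2 z) / (fact k1 * fact k2 * L1 ^ k1 * L2 ^ k2)"
      for k1 k2 :: nat and z
    define CL where "CL m1 m2 \<longleftrightarrow> (\<forall>z\<in>PD m1 m2. \<forall>k1 k2. k1 + k2 \<le> N \<longrightarrow> nd0 k1 k2 z \<le> B ^ (m1 + m2) * S0)"
      for m1 m2
    have base: "CL 0 0"
      unfolding CL_def
    proof (intro ballI allI impI)
      fix z k1 k2 assume z: "z \<in> PD 0 0" and k: "k1 + k2 \<le> N"
      have "z = z0" using z ab by (cases z) (auto simp: PD_def pdisc_def)
      then have "nd0 k1 k2 z = ndrv F l1 l2 k1 k2 z0" by (simp add: nd0_def ndrv_def L1_def L2_def)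
      also have "\<dots> \<le> S0" unfolding S0_def by (rule Max_set_ge[OF k])
      finally show "nd0 k1 k2 z \<le> B ^ (0 + 0) * S0" by simp
    qed
    have Mz: "ndrv F l1 l2 P1 P2 z' \<le> B ^ (m1 + m2) * S0 / lo ^ N"
      if "m1 \<le> q" "m2 \<le> q" "CL m1 m2" "z' \<in> PD m1 m2" for m1 m2 z' P1 P2
    proof -
      have z': "z' \<in> D2" "z' \<in> pdisc z0 (\<beta> / l1 z0) (\<beta> / l2 z0)" using PDin[OF that(1,2,4)] by auto
      have rz: "lo * L1 \<le> l1 z'" "lo * L2 \<le> l2 z'" using rat[OF z0 z'] by (auto simp: L1_def L2_def)
      have lz: "0 < l1 z'" "0 < l2 z'" using lpos1 lpos2 z' by auto
      have "ndrv F l1 l2 P1 P2 z' \<le> Max {ndrv F l1 l2 k1 k2 z' | k1 k2. k1 + k2 \<le> N}"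
        by (rule BN[rule_format, OF z'(1)])
      also have "\<dots> \<le> B ^ (m1 + m2) * S0 / lo ^ N"
      proof (rule Max.boundedI[OF Max_set_fin])
        have "ndrv F l1 l2 0 0 z' \<in> {ndrv F l1 l2 k1 k2 z' | k1 k2. k1 + k2 \<le> N}"
          by (rule CollectI, rule exI[of _ 0], rule exI[of _ 0]) simp
        then show "{ndrv F l1 l2 k1 k2 z' | k1 k2. k1 + k2 \<le> N} \<noteq> {}" by auto
        fix v assume "v \<in> {ndrv F l1 l2 k1 k2 z' | k1 k2. k1 + k2 \<le> N}"
        then obtain k1 k2 where k: "k1 + k2 \<le> N" and v: "v = ndrv F l1 l2 k1 k2 z'" by blast
        show "v \<le> B ^ (m1 + m2) * S0 / lo ^ N" unfolding v
        proof -
        define X where "X = cmod (pderiv2 F k1 k2 z')"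
        have X: "0 \<le> X" by (simp add: X_def)
        have "lo ^ N \<le> lo ^ (k1 + k2)" using lo k by (intro power_decreasing) auto
        also have "\<dots> * (L1 ^ k1 * L2 ^ k2) = (lo * L1) ^ k1 * (lo * L2) ^ k2"
          by (simp add: power_add power_mult_distrib)
        also have "\<dots> \<le> l1 z' ^ k1 * l2 z' ^ k2"
          using rz lo L lz by (intro mult_mono power_mono) auto
        finally have pw: "lo ^ N * (L1 ^ k1 * L2 ^ k2) \<le> l1 z' ^ k1 * l2 z' ^ k2"
          using L by (simp add: mult_right_mono)
        have pos: "0 < lo ^ N * (L1 ^ k1 * L2 ^ k2)" using lo L by simp
        have "ndrv F l1 l2 k1 k2 z' = X / (fact k1 * fact k2 * (l1 z' ^ k1 * l2 z' ^ k2))"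
          by (simp add: ndrv_def X_def mult.assoc)
        also have "\<dots> \<le> X / (fact k1 * fact k2 * (lo ^ N * (L1 ^ k1 * L2 ^ k2)))"
          using pw pos X lz L lo by (intro divide_left_mono mult_left_mono) auto
        also have "\<dots> = nd0 k1 k2 z' / lo ^ N"
          by (simp add: nd0_def X_def field_simps)
        also have "\<dots> \<le> B ^ (m1 + m2) * S0 / lo ^ N"
          using that(3,4) k lo unfolding CL_def by (intro divide_right_mono) auto
        finally show "ndrv F l1 l2 k1 k2 z' \<le> B ^ (m1 + m2) * S0 / lo ^ N" .
      qed
      qed
      finally show ?thesis .
    qed
    have fin: "nd0 j1 j2 zz \<le> B ^ Suc mm * S0"
      if "cmod (pderiv2 F j1 j2 zz) \<le> 2 * (B ^ mm * S0 / lo ^ N * fact j1 * fact j2 * L1 ^ j1 * L2 ^ j2 * (2 * hi) ^ N)"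
      for j1 j2 mm zz
    proof -
      have den: "0 < fact j1 * fact j2 * L1 ^ j1 * L2 ^ j2" using L by simp
      have "nd0 j1 j2 zz \<le> 2 * (B ^ mm * S0 / lo ^ N * fact j1 * fact j2 * L1 ^ j1 * L2 ^ j2 * (2 * hi) ^ N) / (fact j1 * fact j2 * L1 ^ j1 * L2 ^ j2)"
        unfolding nd0_def using that den by (intro divide_right_mono) auto
      also have "\<dots> = B ^ Suc mm * S0"
        using den lo L by (simp add: B_def field_simps)
      finally show ?thesis .
    qed
    have st1: "CL (Suc m1) m2" if m: "m1 < q" "m2 \<le> q" and IH: "CL m1 m2" for m1 m2
      unfolding CL_def
    proof (intro ballI allI impI)
      fix z k1 k2 assume z: "z \<in> PD (Suc m1) m2" and k: "k1 + k2 \<le> N"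
      obtain x y where xy: "z = (x, y)" by (cases z)
      have dx: "cmod (x - a) \<le> (real m1 + 1) * \<rho>1" and dy: "cmod (y - b) \<le> real m2 * \<rho>2"
        using z xy ab by (auto simp: PD_def pdisc_def add.commute)
      obtain x' where x': "cmod (x' - a) \<le> real m1 * \<rho>1" "cmod (x - x') \<le> \<rho>1"
        using shrink[OF dx] \<rho> by auto
      define z' where "z' = (x', y)"
      have z'PD: "z' \<in> PD m1 m2" using x' dy ab by (simp add: z'_def PD_def pdisc_def)
      have z'D: "z' \<in> D2" "z' \<in> pdisc z0 (\<beta> / l1 z0) (\<beta> / l2 z0)" using PDin[OF _ m(2) z'PD] m by auto
      have rz: "l1 z' \<le> hi * L1" "l2 z' \<le> hi * L2" using rat[OF z0 z'D] by (auto simp: L1_def L2_def)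
      have lz: "0 < l1 z'" "0 < l2 z'" using lpos1 lpos2 z'D by auto
      define M' where "M' = B ^ (m1 + m2) * S0 / lo ^ N"
      have M'0: "0 \<le> M'" using B1 S0 lo by (simp add: M'_def)
      have Mb: "\<And>P1 P2. ndrv F l1 l2 P1 P2 z' \<le> M'" unfolding M'_def
        by (rule Mz[OF _ m(2) IH z'PD]) (use m in simp)
      have qb: "2 * hi * (L1 * cmod (x - x')) \<le> 1/2"
      proof -
        have "L1 * cmod (x - x') \<le> L1 * \<rho>1" using x' L by (simp add: mult_left_mono)
        also have "\<dots> = r1 / real q" using L q by (simp add: \<rho>1_def field_simps)
        also have "\<dots> \<le> \<beta> / real q" using r q by (simp add: divide_right_mono)
        finally have "2 * hi * (L1 * cmod (x - x')) \<le> 2 * hi * (\<beta> / real q)" by (rule mult_left_mono) (use hi in auto)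
        also have "\<dots> \<le> 1/2" using q hi b0 by (simp add: field_simps)
        finally show ?thesis .
      qed
      have xa: "cmod (x - x') < 1 - cmod x'"
      proof -
        have "cmod (x - x') \<le> \<beta> / (real q * L1)"
        proof -
          have "r1 / (real q * L1) \<le> \<beta> / (real q * L1)" using r L q by (intro divide_right_mono) auto
          then show ?thesis using x'(2) unfolding \<rho>1_def by linarith
        qed
        also have "\<dots> < \<beta> / (hi * L1)"
          using q L b0 hi by (intro divide_strict_left_mono mult_strict_right_mono) auto
        also have "\<dots> \<le> \<beta> / l1 z'"
          using rz lz b0 by (intro divide_left_mono) auto
        also have "\<dots> < 1 - cmod x'"
        proof -
          have "\<beta> / (1 - cmod x') < l1 z'" using low1 z'D by (auto simp: z'_def)
          moreover have "0 < 1 - cmod x'" using z'D by (simp add: z'_def D2_def)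
          ultimately show ?thesis using lz by (simp add: field_simps)
        qed
        finally show ?thesis .
      qed
      have "cmod (pderiv2 F k1 k2 (x, y)) \<le> 2 * (M' * fact k1 * fact k2 * L1 ^ k1 * L2 ^ k2 * (2 * hi) ^ N)"
      proof (rule step1[OF an _ xa])
        show "(x', y) \<in> D2" using z'D by (simp add: z'_def)
        fix s
        show "cmod (pderiv2 F (k1 + s) k2 (x', y)) * cmod (x - x') ^ s / fact s
              \<le> M' * fact k1 * fact k2 * L1 ^ k1 * L2 ^ k2 * (2 * hi) ^ N * (1 / 2) ^ s"
        proof (rule tay_arith[OF _ M'0 L(1) L(2) _ rz(1) _ rz(2) _ qb hi k])
          have den: "0 < fact (k1 + s) * fact k2 * l1 z' ^ (k1 + s) * l2 z' ^ k2" using lz by simp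
          have "ndrv F l1 l2 (k1 + s) k2 z' \<le> M'" by (rule Mb)
          then show "cmod (pderiv2 F (k1 + s) k2 (x', y)) \<le> M' * (fact (k1 + s) * fact k2 * l1 z' ^ (k1 + s) * l2 z' ^ k2)"
            using den by (simp add: ndrv_def z'_def pos_divide_le_eq mult.assoc)
        qed (use lz in auto)
      qed
      then have "nd0 k1 k2 (x, y) \<le> B ^ Suc (m1 + m2) * S0" unfolding M'_def by (rule fin)
      then show "nd0 k1 k2 z \<le> B ^ (Suc m1 + m2) * S0" using xy by simp
    qed
    have st2: "CL m1 (Suc m2)" if m: "m1 \<le> q" "m2 < q" and IH: "CL m1 m2" for m1 m2
      unfolding CL_def
    proof (intro ballI allI impI)
      fix z k1 k2 assume z: "z \<in> PD m1 (Suc m2)" and k: "k1 + k2 \<le> N"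
      obtain x y where xy: "z = (x, y)" by (cases z)
      have dx: "cmod (x - a) \<le> real m1 * \<rho>1" and dy: "cmod (y - b) \<le> (real m2 + 1) * \<rho>2"
        using z xy ab by (auto simp: PD_def pdisc_def add.commute)
      obtain y' where y': "cmod (y' - b) \<le> real m2 * \<rho>2" "cmod (y - y') \<le> \<rho>2"
        using shrink[OF dy] \<rho> by auto
      define z' where "z' = (x, y')"
      have z'PD: "z' \<in> PD m1 m2" using y' dx ab by (simp add: z'_def PD_def pdisc_def)
      have z'D: "z' \<in> D2" "z' \<in> pdisc z0 (\<beta> / l1 z0) (\<beta> / l2 z0)" using PDin[OF m(1) _ z'PD] m by auto
      have rz: "l1 z' \<le> hi * L1" "l2 z' \<le> hi * L2" using rat[OF z0 z'D] by (auto simp: L1_def L2_def)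
      have lz: "0 < l1 z'" "0 < l2 z'" using lpos1 lpos2 z'D by auto
      define M' where "M' = B ^ (m1 + m2) * S0 / lo ^ N"
      have M'0: "0 \<le> M'" using B1 S0 lo by (simp add: M'_def)
      have Mb: "\<And>P1 P2. ndrv F l1 l2 P1 P2 z' \<le> M'" unfolding M'_def
        by (rule Mz[OF m(1) _ IH z'PD]) (use m in simp)
      have qb: "2 * hi * (L2 * cmod (y - y')) \<le> 1/2"
      proof -
        have "L2 * cmod (y - y') \<le> L2 * \<rho>2" using y' L by (simp add: mult_left_mono)
        also have "\<dots> = r2 / real q" using L q by (simp add: \<rho>2_def field_simps)
        also have "\<dots> \<le> \<beta> / real q" using r q by (simp add: divide_right_mono)
        finally have "2 * hi * (L2 * cmod (y - y')) \<le> 2 * hi * (\<beta> / real q)" by (rule mult_left_mono) (use hi in auto)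
        also have "\<dots> \<le> 1/2" using q hi b0 by (simp add: field_simps)
        finally show ?thesis .
      qed
      have yb: "cmod (y - y') < 1 - cmod y'"
      proof -
        have "cmod (y - y') \<le> \<beta> / (real q * L2)"
        proof -
          have "r2 / (real q * L2) \<le> \<beta> / (real q * L2)" using r L q by (intro divide_right_mono) auto
          then show ?thesis using y'(2) unfolding \<rho>2_def by linarith
        qed
        also have "\<dots> < \<beta> / (hi * L2)"
          using q L b0 hi by (intro divide_strict_left_mono mult_strict_right_mono) auto
        also have "\<dots> \<le> \<beta> / l2 z'"
          using rz lz b0 by (intro divide_left_mono) auto
        also have "\<dots> < 1 - cmod y'"
        proof -
          have "\<beta> / (1 - cmod y') < l2 z'" using low2 z'D by (auto simp: z'_def)
          moreover have "0 < 1 - cmod y'" using z'D by (simp add: z'_def D2_def)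
          ultimately show ?thesis using lz by (simp add: field_simps)
        qed
        finally show ?thesis .
      qed
      have "cmod (pderiv2 F k1 k2 (x, y)) \<le> 2 * (M' * fact k2 * fact k1 * L2 ^ k2 * L1 ^ k1 * (2 * hi) ^ N)"
      proof (rule step2[OF an _ yb])
        show "(x, y') \<in> D2" using z'D by (simp add: z'_def)
        fix s
        have k': "k2 + k1 \<le> N" using k by simp
        show "cmod (pderiv2 F k1 (k2 + s) (x, y')) * cmod (y - y') ^ s / fact s
              \<le> M' * fact k2 * fact k1 * L2 ^ k2 * L1 ^ k1 * (2 * hi) ^ N * (1 / 2) ^ s"
        proof (rule tay_arith[OF _ M'0 L(2) L(1) _ rz(2) _ rz(1) _ qb hi k'])
          have den: "0 < fact k1 * fact (k2 + s) * l1 z' ^ k1 * l2 z' ^ (k2 + s)" using lz by simp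
          have "ndrv F l1 l2 k1 (k2 + s) z' \<le> M'" by (rule Mb)
          then have "cmod (pderiv2 F k1 (k2 + s) (x, y')) \<le> M' * (fact k1 * fact (k2 + s) * l1 z' ^ k1 * l2 z' ^ (k2 + s))"
            using den by (simp add: ndrv_def z'_def pos_divide_le_eq mult.assoc)
          then show "cmod (pderiv2 F k1 (k2 + s) (x, y')) \<le> M' * (fact (k2 + s) * fact k1 * l2 z' ^ (k2 + s) * l1 z' ^ k1)"
            by (simp add: ac_simps)
        qed (use lz in auto)
      qed
      then have "cmod (pderiv2 F k1 k2 (x, y)) \<le> 2 * (M' * fact k1 * fact k2 * L1 ^ k1 * L2 ^ k2 * (2 * hi) ^ N)"
        by (simp add: ac_simps)
      then have "nd0 k1 k2 (x, y) \<le> B ^ Suc (m1 + m2) * S0" unfolding M'_def by (rule fin)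
      then show "nd0 k1 k2 z \<le> B ^ (m1 + Suc m2) * S0" using xy by simp
    qed
    have all0: "m1 \<le> q \<Longrightarrow> CL m1 0" for m1
    proof (induction m1)
      case 0 show ?case by (rule base)
    next
      case (Suc m1) then show ?case using st1[of m1 0] by simp
    qed
    have all: "m2 \<le> q \<Longrightarrow> CL m1 m2" if "m1 \<le> q" for m1 m2
    proof (induction m2)
      case 0 then show ?case using all0 that by simp
    next
      case (Suc m2) then show ?case using st2[of m1 m2] that by simp
    qed
    have fS: "finite {ndrv F l1 l2 k1 k2 z0 | k1 k2. k1 + k2 \<le> N}" by (rule Max_set_fin)
    have "ndrv F l1 l2 0 0 z0 \<in> {ndrv F l1 l2 k1 k2 z0 | k1 k2. k1 + k2 \<le> N}"
      by (rule CollectI, rule exI[of _ 0], rule exI[of _ 0]) simp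
    then have nS: "{ndrv F l1 l2 k1 k2 z0 | k1 k2. k1 + k2 \<le> N} \<noteq> {}" by auto
    have "S0 \<in> {ndrv F l1 l2 k1 k2 z0 | k1 k2. k1 + k2 \<le> N}"
      unfolding S0_def by (rule Max_in[OF fS nS])
    then obtain k1 k2 where k: "k1 + k2 \<le> N" and Sk: "S0 = ndrv F l1 l2 k1 k2 z0"
      by blast
    show "\<exists>k1 k2. k1 + k2 \<le> N \<and> (\<forall>z\<in>pdisc z0 (r1 / l1 z0) (r2 / l2 z0).
               cmod (pderiv2 F k1 k2 z) \<le> B ^ (2 * q) * cmod (pderiv2 F k1 k2 z0))"
    proof (intro exI conjI ballI, rule k)
      fix z assume z: "z \<in> pdisc z0 (r1 / l1 z0) (r2 / l2 z0)"
      then have zq: "z \<in> PD q q" using \<rho> by (simp add: PD_def L1_def L2_def)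
      have "nd0 k1 k2 z \<le> B ^ (q + q) * S0" using all[OF order_refl order_refl] zq k unfolding CL_def by blast
      then have i: "nd0 k1 k2 z \<le> B ^ (2 * q) * ndrv F l1 l2 k1 k2 z0" by (simp add: Sk mult_2)
      have den: "0 < fact k1 * fact k2 * L1 ^ k1 * L2 ^ k2" using L by simp
      have e: "ndrv F l1 l2 k1 k2 z0 = cmod (pderiv2 F k1 k2 z0) / (fact k1 * fact k2 * L1 ^ k1 * L2 ^ k2)"
        by (simp add: ndrv_def L1_def L2_def)
      have "cmod (pderiv2 F k1 k2 z) / (fact k1 * fact k2 * L1 ^ k1 * L2 ^ k2)
          \<le> (B ^ (2 * q) * cmod (pderiv2 F k1 k2 z0)) / (fact k1 * fact k2 * L1 ^ k1 * L2 ^ k2)"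
        using i unfolding e nd0_def by simp
      then show "cmod (pderiv2 F k1 k2 z) \<le> B ^ (2 * q) * cmod (pderiv2 F k1 k2 z0)"
        using den by (simp add: divide_le_cancel)
    qed
  qed
qed

theorem theorem2:
  fixes \<beta> :: real and l1 l2 :: "complex \<times> complex \<Rightarrow> real"
    and F :: "complex \<times> complex \<Rightarrow> complex"
  assumes beta: "\<beta> > 1"
    and cont1: "continuous_on D2 l1" and cont2: "continuous_on D2 l2"
    and low1: "\<forall>z\<in>D2. l1 z > \<beta> / (1 - cmod (fst z))"
    and low2: "\<forall>z\<in>D2. l2 z > \<beta> / (1 - cmod (snd z))"
    and LQ: "Q2 \<beta> l1 l2"
    and an: "analytic_D2 F"
  shows
   "(bounded_L_index_joint F l1 l2 \<longrightarrow>
      (\<forall>r1 r2. 0 < r1 \<and> r1 \<le> \<beta> \<and> 0 < r2 \<and> r2 \<le> \<beta> \<longrightarrow>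
        (\<exists>n0::nat. \<exists>p::real. p \<ge> 1 \<and>
          (\<forall>z0\<in>D2. \<exists>k1 k2::nat. k1 + k2 \<le> n0 \<and>
             (\<forall>z\<in>pdisc z0 (r1 / l1 z0) (r2 / l2 z0).
                cmod (pderiv2 F k1 k2 z) \<le> p * cmod (pderiv2 F k1 k2 z0))))))
    \<and>
    ((\<forall>r1 r2. 0 < r1 \<and> r1 \<le> \<beta> \<and> 0 < r2 \<and> r2 \<le> \<beta> \<longrightarrow>
        (\<exists>n0::nat. \<exists>p::real. p \<ge> 1 \<and>
          (\<forall>z0\<in>D2. \<exists>k1 k2::nat. k1 \<le> n0 \<and> k2 \<le> n0 \<and>
             (\<forall>z\<in>pdisc z0 (r1 / l1 z0) (r2 / l2 z0).
                cmod (pderiv2 F k1 0 z) \<le> p * cmod (pderiv2 F k1 0 z0)) \<and>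
             (\<forall>z\<in>pdisc z0 (r1 / l1 z0) (r2 / l2 z0).
                cmod (pderiv2 F 0 k2 z) \<le> p * cmod (pderiv2 F 0 k2 z0)))))
     \<longrightarrow> bounded_L_index_joint F l1 l2)"
proof (intro conjI)
  show "bounded_L_index_joint F l1 l2 \<longrightarrow>
      (\<forall>r1 r2. 0 < r1 \<and> r1 \<le> \<beta> \<and> 0 < r2 \<and> r2 \<le> \<beta> \<longrightarrow>
        (\<exists>n0::nat. \<exists>p::real. p \<ge> 1 \<and>
          (\<forall>z0\<in>D2. \<exists>k1 k2::nat. k1 + k2 \<le> n0 \<and>
             (\<forall>z\<in>pdisc z0 (r1 / l1 z0) (r2 / l2 z0).
                cmod (pderiv2 F k1 k2 z) \<le> p * cmod (pderiv2 F k1 k2 z0)))))"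
    using part1[OF beta low1 low2 LQ an] by blast
  show "(\<forall>r1 r2. 0 < r1 \<and> r1 \<le> \<beta> \<and> 0 < r2 \<and> r2 \<le> \<beta> \<longrightarrow>
        (\<exists>n0::nat. \<exists>p::real. p \<ge> 1 \<and>
          (\<forall>z0\<in>D2. \<exists>k1 k2::nat. k1 \<le> n0 \<and> k2 \<le> n0 \<and>
             (\<forall>z\<in>pdisc z0 (r1 / l1 z0) (r2 / l2 z0).
                cmod (pderiv2 F k1 0 z) \<le> p * cmod (pderiv2 F k1 0 z0)) \<and>
             (\<forall>z\<in>pdisc z0 (r1 / l1 z0) (r2 / l2 z0).
                cmod (pderiv2 F 0 k2 z) \<le> p * cmod (pderiv2 F 0 k2 z0)))))
     \<longrightarrow> bounded_L_index_joint F l1 l2"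
    using part2[OF beta low1 low2 an] by blast
qed

end
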